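(* Let $n,d,a$ be positive integers and $p$ a prime. Suppose that every point $Q\in\mathcal{V}_d\subseteq\mathbb{C}^n$ with $\mathcal{P}_1(Q)=0$ is $p$-symmetric. Let $g:=\gcd(d,n)$ and assume $p\mid g$. Then $(n,d,a)$ is bad if and only if $g\nmid a$.
   Context: $\mathcal{V}_d=\{(z_1,\dots,z_n)\in\mathbb{C}^n: z_i^d=1\ \forall i,\ z_n=1\}$ and $\mathcal{P}_1=x_1+\dots+x_n$. A point $Q=(z_1,\dots,z_n)$ whose coordinates are $d$-th roots of unity is $v$-symmetric if, for a primitive $v$-th root of unity $\epsilon$, there is a permutation $\tau\in\mathfrak{S}_n$ with $(\epsilon z_1,\dots,\epsilon z_n)=(z_{\tau(1)},\dots,z_{\tau(n)})$. Let $R=\mathbb{C}[x_1,\dots,x_n]$, and $R_a^{\mathfrak{S}_n}$ the symmetric polynomials homogeneous of degree $a$. A triple $(n,d,a)$ is good if there exists $f\in R_a^{\mathfrak{S}_n}$ such that $x_1^d-x_n^d,\dots,x_{n-1}^d-x_n^d,f$ is a regular sequence (equivalently, $f$ has no zero on $\mathcal{V}_d$); otherwise it is bad. *)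

theory Defs
  imports Complex_Main "HOL-Combinatorics.Permutations" "HOL-Computational_Algebra.Primes"
begin

text \<open>Points of C^n are functions z :: nat => complex, coordinate z_i (i = 1..n)
  being z (i-1); only indices below n matter.  Multivariate polynomials in
  x_1..x_n are represented by their coefficient functions on exponent vectors
  alpha :: nat => nat (alpha i = exponent of x_(i+1), zero for i >= n).\<close>

definition V :: "nat \<Rightarrow> nat \<Rightarrow> (nat \<Rightarrow> complex) set" where
  "V d n = {z. (\<forall>i<n. z i ^ d = 1) \<and> z (n - 1) = 1}"

definition P1 :: "nat \<Rightarrow> (nat \<Rightarrow> complex) \<Rightarrow> complex" where
  "P1 n z = (\<Sum>i<n. z i)"

definition primitive_root :: "nat \<Rightarrow> complex \<Rightarrow> bool" where
  "primitive_root v e \<longleftrightarrow> e ^ v = 1 \<and> (\<forall>k. 0 < k \<and> k < v \<longrightarrow> e ^ k \<noteq> 1)"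

definition v_symmetric :: "nat \<Rightarrow> nat \<Rightarrow> (nat \<Rightarrow> complex) \<Rightarrow> bool" where
  "v_symmetric n v z \<longleftrightarrow>
     (\<exists>e. primitive_root v e \<and> (\<exists>\<tau>. \<tau> permutes {..<n} \<and> (\<forall>i<n. e * z i = z (\<tau> i))))"

definition mon_exps :: "nat \<Rightarrow> nat \<Rightarrow> (nat \<Rightarrow> nat) set" where
  "mon_exps n a = {\<alpha>. (\<forall>i\<ge>n. \<alpha> i = 0) \<and> (\<Sum>i<n. \<alpha> i) = a}"

definition sym_hom_poly :: "nat \<Rightarrow> nat \<Rightarrow> ((nat \<Rightarrow> nat) \<Rightarrow> complex) \<Rightarrow> bool" where
  "sym_hom_poly n a f \<longleftrightarrow>
     (\<forall>\<alpha>. \<alpha> \<notin> mon_exps n a \<longrightarrow> f \<alpha> = 0) \<and>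
     (\<forall>\<sigma> \<alpha>. \<sigma> permutes {..<n} \<longrightarrow> f (\<alpha> \<circ> \<sigma>) = f \<alpha>)"

definition hom_eval :: "nat \<Rightarrow> nat \<Rightarrow> ((nat \<Rightarrow> nat) \<Rightarrow> complex) \<Rightarrow> (nat \<Rightarrow> complex) \<Rightarrow> complex" where
  "hom_eval n a f z = (\<Sum>\<alpha>\<in>mon_exps n a. f \<alpha> * (\<Prod>i<n. z i ^ \<alpha> i))"

definition good :: "nat \<Rightarrow> nat \<Rightarrow> nat \<Rightarrow> bool" where
  "good n d a \<longleftrightarrow> (\<exists>f. sym_hom_poly n a f \<and> (\<forall>z\<in>V d n. hom_eval n a f z \<noteq> 0))"

definition bad :: "nat \<Rightarrow> nat \<Rightarrow> nat \<Rightarrow> bool" where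
  "bad n d a \<longleftrightarrow> \<not> good n d a"

end

theory Submission
  imports Defs "HOL-Library.FuncSet" "HOL-Computational_Algebra.Polynomial"
begin


lemma mon_exps_finite: "finite (mon_exps n a)"
proof -
  have "mon_exps n a \<subseteq> (\<lambda>w i. if i<n then w i else 0) ` (PiE {..<n} (\<lambda>_. {..a}))"
  proof
    fix \<alpha> assume A: "\<alpha> \<in> mon_exps n a"
    hence z: "\<forall>i\<ge>n. \<alpha> i = 0" and s: "(\<Sum>i<n. \<alpha> i) = a" by (auto simp: mon_exps_def)
    have le: "\<alpha> i \<le> a" if "i < n" for i
      using s that member_le_sum[of i "{..<n}" \<alpha>] by auto
    show "\<alpha> \<in> (\<lambda>w i. if i<n then w i else 0) ` (PiE {..<n} (\<lambda>_. {..a}))"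
      by (rule image_eqI[where x="restrict \<alpha> {..<n}"]) (use z le in \<open>auto simp: fun_eq_iff\<close>)
  qed
  thus ?thesis by (rule finite_subset) (auto intro: finite_PiE)
qed

lemma hom_eval_perm:
  assumes f: "sym_hom_poly n a f" and t: "\<tau> permutes {..<n}" and w: "\<forall>i<n. w i = z (\<tau> i)"
  shows "hom_eval n a f w = hom_eval n a f z"
proof -
  have it: "inv \<tau> permutes {..<n}" using t by (rule permutes_inv)
  have "hom_eval n a f w = (\<Sum>\<alpha>\<in>mon_exps n a. f \<alpha> * (\<Prod>j<n. z j ^ \<alpha> (inv \<tau> j)))"
    unfolding hom_eval_def
  proof (rule sum.cong[OF refl])
    fix \<alpha> assume "\<alpha> \<in> mon_exps n a"
    have "(\<Prod>j<n. z j ^ \<alpha> (inv \<tau> j)) = (\<Prod>i<n. z (\<tau> i) ^ \<alpha> (inv \<tau> (\<tau> i)))"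
      using prod.permute[OF t, of "\<lambda>j. z j ^ \<alpha> (inv \<tau> j)"] by (simp add: comp_def)
    also have "\<dots> = (\<Prod>i<n. w i ^ \<alpha> i)"
      using w permutes_inverses(2)[OF t] by simp
    finally show "f \<alpha> * (\<Prod>i<n. w i ^ \<alpha> i) = f \<alpha> * (\<Prod>j<n. z j ^ \<alpha> (inv \<tau> j))" by simp
  qed
  also have "\<dots> = hom_eval n a f z"
    unfolding hom_eval_def
  proof (rule sum.reindex_bij_witness[where i="\<lambda>\<beta>. \<beta> \<circ> \<tau>" and j="\<lambda>\<alpha>. \<alpha> \<circ> inv \<tau>"])
    fix \<alpha> assume "\<alpha> \<in> mon_exps n a"
    show "\<alpha> \<circ> inv \<tau> \<circ> \<tau> = \<alpha>" using permutes_inv_o(2)[OF t] by (simp add: comp_assoc)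
    show "\<alpha> \<circ> inv \<tau> \<in> mon_exps n a" using \<open>\<alpha> \<in> mon_exps n a\<close>
      using permutes_not_in[OF it] sum.permute[OF it, of \<alpha>]
      by (auto simp: mon_exps_def)
    show "f (\<alpha> \<circ> inv \<tau>) * (\<Prod>i<n. z i ^ (\<alpha> \<circ> inv \<tau>) i) = f \<alpha> * (\<Prod>j<n. z j ^ \<alpha> (inv \<tau> j))"
      using f it by (simp add: sym_hom_poly_def)
  next
    fix \<beta> assume "\<beta> \<in> mon_exps n a"
    show "\<beta> \<circ> \<tau> \<circ> inv \<tau> = \<beta>" using permutes_inv_o(1)[OF t] by (simp add: comp_assoc)
    show "\<beta> \<circ> \<tau> \<in> mon_exps n a" using \<open>\<beta> \<in> mon_exps n a\<close>
      using permutes_not_in[OF t] sum.permute[OF t, of \<beta>]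
      by (auto simp: mon_exps_def)
  qed
  finally show ?thesis .
qed

lemma hom_eval_scale:
  "hom_eval n a f (\<lambda>i. c * z i) = c ^ a * hom_eval n a f z"
  unfolding hom_eval_def sum_distrib_left
proof (rule sum.cong[OF refl])
  fix \<alpha> assume "\<alpha> \<in> mon_exps n a"
  hence s: "(\<Sum>i<n. \<alpha> i) = a" by (auto simp: mon_exps_def)
  have "(\<Prod>i<n. (c * z i) ^ \<alpha> i) = (\<Prod>i<n. c ^ \<alpha> i) * (\<Prod>i<n. z i ^ \<alpha> i)"
    by (simp add: power_mult_distrib prod.distrib)
  also have "(\<Prod>i<n. c ^ \<alpha> i) = c ^ a" using s by (simp add: power_sum[symmetric])
  finally show "f \<alpha> * (\<Prod>i<n. (c * z i) ^ \<alpha> i) = c ^ a * (f \<alpha> * (\<Prod>i<n. z i ^ \<alpha> i))"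
    by simp
qed

lemma cyc_permutes:
  fixes n :: nat
  defines "\<tau> \<equiv> \<lambda>i. if i < n then (if Suc i = n then 0 else Suc i) else i"
  shows "\<tau> permutes {..<n}"
proof (rule bij_imp_permutes)
  have inj: "inj_on \<tau> {..<n}" unfolding inj_on_def \<tau>_def by auto
  have sub: "\<tau> ` {..<n} \<subseteq> {..<n}" unfolding \<tau>_def by auto
  show "bij_betw \<tau> {..<n} {..<n}" unfolding bij_betw_def
    using inj endo_inj_surj[OF _ sub inj] by auto
  show "\<And>x. x \<notin> {..<n} \<Longrightarrow> \<tau> x = x" unfolding \<tau>_def by auto
qed

lemma bad_dir:
  fixes n d a :: nat
  assumes n: "0 < n" and d: "0 < d" and nd: "\<not> gcd d n dvd a"
  shows "\<not> good n d a"
proof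
  define g where "g = gcd d n"
  have g: "g > 0" using n by (simp add: g_def)
  define \<zeta> where "\<zeta> = cis (2 * pi / real g)"
  have pw: "\<zeta> ^ k = cis (2 * pi * real k / real g)" for k
    unfolding \<zeta>_def DeMoivre by (simp add: field_simps)
  have zg: "\<zeta> ^ g = 1" using g pw[of g] by simp
  have zmod: "\<zeta> ^ k = \<zeta> ^ (k mod g)" for k
  proof -
    have "\<zeta> ^ k = \<zeta> ^ (g * (k div g) + k mod g)" by (metis div_mult_mod_eq mult.commute)
    also have "\<dots> = \<zeta> ^ (k mod g)" by (simp only: power_add power_mult zg power_one mult_1)
    finally show ?thesis .
  qed
  have za: "\<zeta> ^ a \<noteq> 1"
  proof
    assume "\<zeta> ^ a = 1"
    hence "cis (2 * pi * real (a mod g) / real g) = cis (2 * pi * real 0 / real g)"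
      using zmod[of a] pw[of "a mod g"] by simp
    moreover have "inj_on (\<lambda>k. cis (2 * pi * real k / real g)) {..<g}"
      using bij_betw_roots_unity[OF g] by (simp add: bij_betw_def)
    ultimately have "a mod g = 0" using g by (auto simp: inj_on_def)
    thus False using nd by (auto simp: g_def)
  qed
  define z where "z = (\<lambda>i::nat. \<zeta> ^ Suc i)"
  have gd: "g dvd d" and gn: "g dvd n" by (auto simp: g_def)
  have zV: "z \<in> V d n"
  proof -
    have "z i ^ d = 1" for i
    proof -
      obtain k where "d = g * k" using gd by blast
      hence "z i ^ d = (\<zeta> ^ g) ^ (k * Suc i)" unfolding z_def
        by (simp only: power_mult[symmetric]) (simp add: mult_ac)
      thus ?thesis using zg by simp
    qed
    moreover have "z (n - 1) = 1" unfolding z_def using n zmod[of n] gn by simp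
    ultimately show ?thesis by (simp add: V_def)
  qed
  define \<tau> where "\<tau> = (\<lambda>i. if i < n then (if Suc i = n then 0 else Suc i) else i)"
  have tp: "\<tau> permutes {..<n}" unfolding \<tau>_def by (rule cyc_permutes)
  have zt: "\<forall>i<n. \<zeta> * z i = z (\<tau> i)"
  proof (intro allI impI)
    fix i assume i: "i < n"
    show "\<zeta> * z i = z (\<tau> i)"
    proof (cases "Suc i = n")
      case True
      have "\<zeta> * z i = \<zeta> ^ n * \<zeta>" unfolding z_def using True by (simp add: mult_ac)
      also have "\<zeta> ^ n = 1" using zmod[of n] gn by simp
      finally show ?thesis using True i unfolding z_def \<tau>_def by simp
    next
      case False thus ?thesis using i unfolding z_def \<tau>_def by simp
    qed
  qed
  assume "good n d a"
  then obtain f where f: "sym_hom_poly n a f" and nz: "\<forall>z\<in>V d n. hom_eval n a f z \<noteq> 0"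
    by (auto simp: good_def)
  have "hom_eval n a f (\<lambda>i. \<zeta> * z i) = hom_eval n a f z"
    by (rule hom_eval_perm[OF f tp]) (use zt in auto)
  hence "\<zeta> ^ a * hom_eval n a f z = hom_eval n a f z" by (simp add: hom_eval_scale)
  hence "hom_eval n a f z = 0" using za
    by (metis mult_cancel_right1)
  thus False using nz zV by auto
qed

lemma psum_pow:
  fixes n m a :: nat
  assumes m: "0 < m" and ma: "m dvd a"
  shows "\<exists>f. sym_hom_poly n a f \<and> (\<forall>z. hom_eval n a f z = (\<Sum>i<n. z i ^ m) ^ (a div m))"
proof -
  define e where "e = a div m"
  have a: "a = m * e" using ma by (simp add: e_def)
  define S where "S = PiE {..<e} (\<lambda>_. {..<n::nat})"
  define G where "G = (\<lambda>s::nat\<Rightarrow>nat. \<lambda>i. m * card {k\<in>{..<e}. s k = i})"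
  define f where "f = (\<lambda>\<gamma>. of_nat (card {s\<in>S. G s = \<gamma>}) :: complex)"
  have fS: "finite S" unfolding S_def by (auto intro: finite_PiE)
  have GM: "G s \<in> mon_exps n a" if s: "s \<in> S" for s
  proof -
    have "\<forall>i\<ge>n. G s i = 0" using s by (auto simp: G_def S_def PiE_def Pi_def)
    moreover have "(\<Sum>i<n. card {k\<in>{..<e}. s k = i}) = e"
    proof -
      have "(\<Sum>i<n. card {k\<in>{..<e}. s k = i}) = (\<Sum>i<n. \<Sum>k\<in>{k\<in>{..<e}. s k = i}. 1::nat)"
        by simp
      also have "\<dots> = (\<Sum>k<e. 1::nat)"
        by (rule sum.group) (use s in \<open>auto simp: S_def\<close>)
      finally show ?thesis by simp
    qed
    hence "(\<Sum>i<n. G s i) = a" by (simp add: G_def a sum_distrib_left[symmetric])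
    ultimately show ?thesis by (simp add: mon_exps_def)
  qed
  have card_le: "card {s\<in>S. G s = \<gamma> \<circ> \<sigma>} \<le> card {s\<in>S. G s = \<gamma>}"
    if sg: "\<sigma> permutes {..<n}" for \<gamma> \<sigma>
  proof -
    define h where "h = (\<lambda>s. restrict (\<sigma> \<circ> s) {..<e})"
    have Gh: "G (h s) = (\<lambda>i. G s (inv \<sigma> i))" for s
    proof
      fix i
      have "{k\<in>{..<e}. h s k = i} = {k\<in>{..<e}. s k = inv \<sigma> i}"
        unfolding h_def using permutes_inverses[OF sg] by (auto simp: restrict_def)
      thus "G (h s) i = G s (inv \<sigma> i)" by (simp add: G_def)
    qed
    show ?thesis
    proof (rule card_inj_on_le)
      show "inj_on h {s\<in>S. G s = \<gamma> \<circ> \<sigma>}"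
      proof (rule inj_onI)
        fix s s' assume s: "s \<in> {s\<in>S. G s = \<gamma> \<circ> \<sigma>}" and s': "s' \<in> {s\<in>S. G s = \<gamma> \<circ> \<sigma>}"
          and eq: "h s = h s'"
        show "s = s'"
        proof
          fix k show "s k = s' k"
          proof (cases "k < e")
            case True
            hence "\<sigma> (s k) = \<sigma> (s' k)" using fun_cong[OF eq, of k] by (simp add: h_def)
            thus ?thesis using permutes_inj[OF sg] by (simp add: inj_eq)
          next
            case False thus ?thesis using s s' by (auto simp: S_def PiE_def extensional_def)
          qed
        qed
      qed
      show "h ` {s\<in>S. G s = \<gamma> \<circ> \<sigma>} \<subseteq> {s\<in>S. G s = \<gamma>}"
      proof safe
        fix s assume s: "s \<in> S" and g: "G s = \<gamma> \<circ> \<sigma>"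
        show "h s \<in> S" using s permutes_in_image[OF sg] by (auto simp: h_def S_def PiE_def Pi_def)
        show "G (h s) = \<gamma>" unfolding Gh g using permutes_inverses[OF sg] by (simp add: fun_eq_iff)
      qed
      show "finite {s\<in>S. G s = \<gamma>}" using fS by simp
    qed
  qed
  have sym: "sym_hom_poly n a f"
    unfolding sym_hom_poly_def
  proof (intro conjI allI impI)
    fix \<alpha> assume "\<alpha> \<notin> mon_exps n a"
    hence "{s\<in>S. G s = \<alpha>} = {}" using GM by auto
    thus "f \<alpha> = 0" unfolding f_def by (metis card.empty of_nat_0)
  next
    fix \<sigma> \<alpha> assume sg: "\<sigma> permutes {..<n}"
    have "card {s\<in>S. G s = \<alpha> \<circ> \<sigma> \<circ> inv \<sigma>} \<le> card {s\<in>S. G s = \<alpha> \<circ> \<sigma>}"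
      by (rule card_le[OF permutes_inv[OF sg]])
    moreover have "\<alpha> \<circ> \<sigma> \<circ> inv \<sigma> = \<alpha>" using permutes_inv_o(1)[OF sg] by (simp add: comp_assoc)
    ultimately have "card {s\<in>S. G s = \<alpha>} \<le> card {s\<in>S. G s = \<alpha> \<circ> \<sigma>}" by simp
    with card_le[OF sg, of \<alpha>] show "f (\<alpha> \<circ> \<sigma>) = f \<alpha>" by (simp add: f_def)
  qed
  have ev: "hom_eval n a f z = (\<Sum>i<n. z i ^ m) ^ e" for z
  proof -
    define Z where "Z = (\<lambda>\<gamma>. \<Prod>i<n. z i ^ \<gamma> i)"
    have ZG: "Z (G s) = (\<Prod>k<e. z (s k) ^ m)" if s: "s \<in> S" for s
    proof -
      have "Z (G s) = (\<Prod>i<n. \<Prod>k\<in>{k\<in>{..<e}. s k = i}. z (s k) ^ m)"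
        unfolding Z_def G_def
      proof (rule prod.cong[OF refl])
        fix i
        have "(\<Prod>k\<in>{k\<in>{..<e}. s k = i}. z (s k) ^ m) = (\<Prod>k\<in>{k\<in>{..<e}. s k = i}. z i ^ m)"
          by (rule prod.cong) auto
        also have "\<dots> = z i ^ (m * card {k\<in>{..<e}. s k = i})"
          by (simp add: power_mult[symmetric] mult.commute)
        finally show "z i ^ (m * card {k\<in>{..<e}. s k = i}) = (\<Prod>k\<in>{k\<in>{..<e}. s k = i}. z (s k) ^ m)"
          by simp
      qed
      also have "\<dots> = (\<Prod>k<e. z (s k) ^ m)"
        by (rule prod.group) (use s in \<open>auto simp: S_def\<close>)
      finally show ?thesis .
    qed
    have "hom_eval n a f z = (\<Sum>\<gamma>\<in>mon_exps n a. of_nat (card {s\<in>S. G s = \<gamma>}) * Z \<gamma>)"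
      unfolding hom_eval_def Z_def f_def by simp
    also have "\<dots> = (\<Sum>\<gamma>\<in>mon_exps n a. \<Sum>s\<in>{s\<in>S. G s = \<gamma>}. Z (G s))"
    proof (rule sum.cong[OF refl])
      fix \<gamma>
      have "(\<Sum>s\<in>{s\<in>S. G s = \<gamma>}. Z (G s)) = (\<Sum>s\<in>{s\<in>S. G s = \<gamma>}. Z \<gamma>)"
        by (rule sum.cong) auto
      thus "of_nat (card {s\<in>S. G s = \<gamma>}) * Z \<gamma> = (\<Sum>s\<in>{s\<in>S. G s = \<gamma>}. Z (G s))"
        by simp
    qed
    also have "\<dots> = (\<Sum>s\<in>S. Z (G s))"
      by (rule sum.group[OF fS mon_exps_finite]) (use GM in auto)
    also have "\<dots> = (\<Sum>s\<in>S. \<Prod>k<e. z (s k) ^ m)"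
      by (rule sum.cong) (auto simp: ZG)
    also have "\<dots> = (\<Prod>k<e. \<Sum>i<n. z i ^ m)"
      unfolding S_def by (rule prod_sum_PiE[symmetric]) auto
    also have "\<dots> = (\<Sum>i<n. z i ^ m) ^ e" by simp
    finally show ?thesis .
  qed
  show ?thesis using sym ev by (auto simp: e_def)
qed



lemma prim_pow_inj:
  assumes e: "primitive_root p e" and r: "r < p" and r': "r' < p" and eq: "e ^ r = e ^ r'"
  shows "r = r'"
proof -
  have e0: "e \<noteq> 0" using e r by (auto simp: primitive_root_def power_0_left)
  have *: "False" if lt: "x < y" "y < p" "e ^ x = e ^ y" for x y
  proof -
    have "e ^ y = e ^ x * e ^ (y - x)" using lt by (metis le_add_diff_inverse less_imp_le power_add)
    hence "e ^ (y - x) = 1" using lt(3) e0 by simp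
    thus False using e lt by (auto simp: primitive_root_def)
  qed
  show ?thesis using *[of r r'] *[of r' r] r r' eq by (cases r r' rule: linorder_cases) auto
qed

lemma prim_dvd:
  assumes e: "primitive_root p e" and k: "e ^ k = 1" and p: "0 < p"
  shows "p dvd k"
proof -
  have "e ^ k = (e ^ p) ^ (k div p) * e ^ (k mod p)"
    by (metis div_mult_mod_eq power_add power_mult mult.commute)
  hence "e ^ (k mod p) = 1" using e k by (simp add: primitive_root_def)
  hence "k mod p = 0" using e p by (auto simp: primitive_root_def)
  thus ?thesis by auto
qed

lemma prim_roots:
  assumes e: "primitive_root p e" and p: "0 < p" and y: "y ^ p = 1"
  shows "\<exists>r<p. y = e ^ r"
proof -
  have sub: "(\<lambda>r. e ^ r) ` {..<p} \<subseteq> {y. y ^ p = 1}"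
  proof safe
    fix r show "(e ^ r) ^ p = 1" using e by (metis power_mult mult.commute power_one primitive_root_def)
  qed
  have inj: "inj_on (\<lambda>r. e ^ r) {..<p}" using prim_pow_inj[OF e] by (auto simp: inj_on_def)
  have fin: "finite {y::complex. y ^ p = 1}" using p by (intro finite_roots_unity) simp
  have "card ((\<lambda>r. e ^ r) ` {..<p}) = p" using inj by (simp add: card_image)
  moreover have "card {y::complex. y ^ p = 1} \<le> p" using p by (intro card_roots_unity) simp
  ultimately have "(\<lambda>r. e ^ r) ` {..<p} = {y. y ^ p = 1}"
    using card_subset_eq[OF fin sub] card_mono[OF fin sub] by simp
  thus ?thesis using y by auto
qed

lemma card_fibers_dvd:
  fixes w :: "nat \<Rightarrow> 'b"
  assumes "\<forall>i<n. m dvd card {l\<in>{..<n}. w l = w i}"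
  shows "m dvd n"
proof -
  have "n = (\<Sum>k<n. 1::nat)" by simp
  also have "\<dots> = (\<Sum>y\<in>w ` {..<n}. \<Sum>k\<in>{k\<in>{..<n}. w k = y}. 1::nat)"
    by (rule sum.group[symmetric]) auto
  also have "\<dots> = (\<Sum>y\<in>w ` {..<n}. card {k\<in>{..<n}. w k = y})" by simp
  finally have eq: "n = \<dots>" .
  have "m dvd (\<Sum>y\<in>w ` {..<n}. card {k\<in>{..<n}. w k = y})"
    by (rule dvd_sum) (use assms in auto)
  thus ?thesis using eq by simp
qed

lemma mult_step:
  fixes v :: "nat \<Rightarrow> complex"
  assumes p: "prime p" and e: "primitive_root p e" and t: "\<tau> permutes {..<n}"
    and ev: "\<forall>i<n. e * v i = v (\<tau> i)" and nz: "\<forall>i<n. v i \<noteq> 0"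
    and md: "\<forall>i<n. m dvd card {l\<in>{..<n}. v l = v i}"
  shows "\<forall>i<n. p * m dvd card {l\<in>{..<n}. v l ^ p = v i ^ p}"
proof (intro allI impI)
  fix i assume i: "i < n"
  define c where "c = v i"
  have c0: "c \<noteq> 0" using nz i by (simp add: c_def)
  have p0: "0 < p" using p by (simp add: prime_gt_0_nat)
  define A where "A = (\<lambda>x. {l\<in>{..<n}. v l = x})"
  have le1: "card (A x) \<le> card (A (e * x))" for x
  proof (rule card_inj_on_le[of \<tau>])
    show "inj_on \<tau> (A x)" by (rule inj_on_subset[OF permutes_inj[OF t]]) simp
    show "\<tau> ` A x \<subseteq> A (e * x)"
    proof
      fix y assume "y \<in> \<tau> ` A x"
      then obtain l where l: "l < n" "v l = x" and y: "y = \<tau> l" by (auto simp: A_def)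
      have "\<tau> l < n" using permutes_in_image[OF t] l(1) by simp
      moreover have "v (\<tau> l) = e * x" using ev l by metis
      ultimately show "y \<in> A (e * x)" using y by (simp add: A_def)
    qed
    show "finite (A (e * x))" by (simp add: A_def)
  qed
  have le2: "card (A x) \<le> card (A (e ^ r * x))" for x r
  proof (induction r)
    case 0 thus ?case by simp
  next
    case (Suc r)
    from le_trans[OF this le1[of "e ^ r * x"]] show ?case by (simp add: mult.assoc)
  qed
  have eqc: "card (A (e ^ r * c)) = card (A c)" if r: "r < p" for r
  proof (rule antisym)
    have "card (A (e ^ r * c)) \<le> card (A (e ^ (p - r) * (e ^ r * c)))" by (rule le2)
    also have "e ^ (p - r) * (e ^ r * c) = c"
      using r e by (simp add: mult.assoc[symmetric] power_add[symmetric] primitive_root_def)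
    finally show "card (A (e ^ r * c)) \<le> card (A c)" .
    show "card (A c) \<le> card (A (e ^ r * c))" using le2[of c r] by simp
  qed
  have un: "{l\<in>{..<n}. v l ^ p = c ^ p} = (\<Union>r<p. A (e ^ r * c))"
  proof (rule set_eqI, rule iffI)
    fix l assume "l \<in> {l\<in>{..<n}. v l ^ p = c ^ p}"
    hence l: "l < n" and vl: "v l ^ p = c ^ p" by auto
    have "(v l / c) ^ p = 1" using vl c0 by (simp add: power_divide)
    then obtain r where r: "r < p" "v l / c = e ^ r" using prim_roots[OF e p0] by blast
    hence "v l = e ^ r * c" using c0 by (simp add: field_simps)
    thus "l \<in> (\<Union>r<p. A (e ^ r * c))" using r l by (auto simp: A_def)
  next
    fix l assume "l \<in> (\<Union>r<p. A (e ^ r * c))"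
    then obtain r where "r < p" and "l \<in> A (e ^ r * c)" by auto
    hence l: "l < n" and vl: "v l = e ^ r * c" by (auto simp: A_def)
    have "(e ^ r) ^ p = 1" using e by (metis power_mult mult.commute power_one primitive_root_def)
    hence "v l ^ p = c ^ p" using vl by (simp add: power_mult_distrib)
    thus "l \<in> {l\<in>{..<n}. v l ^ p = c ^ p}" using l by simp
  qed
  have "card (\<Union>r<p. A (e ^ r * c)) = (\<Sum>r<p. card (A (e ^ r * c)))"
  proof (rule card_UN_disjoint)
    show "finite {..<p}" by simp
    show "\<forall>r\<in>{..<p}. finite (A (e ^ r * c))" by (simp add: A_def)
    show "\<forall>r\<in>{..<p}. \<forall>r'\<in>{..<p}. r \<noteq> r' \<longrightarrow> A (e ^ r * c) \<inter> A (e ^ r' * c) = {}"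
    proof (intro ballI impI)
      fix r r' assume r: "r \<in> {..<p}" and r': "r' \<in> {..<p}" and ne: "r \<noteq> r'"
      have "e ^ r * c \<noteq> e ^ r' * c" using prim_pow_inj[OF e, of r r'] r r' ne c0 by auto
      thus "A (e ^ r * c) \<inter> A (e ^ r' * c) = {}" by (auto simp: A_def)
    qed
  qed
  also have "\<dots> = (\<Sum>r<p. card (A c))" by (rule sum.cong) (auto simp: eqc)
  also have "\<dots> = p * card (A c)" by simp
  finally have "card {l\<in>{..<n}. v l ^ p = c ^ p} = p * card (A c)" using un by simp
  moreover have "m dvd card (A c)" using md i by (simp add: A_def c_def)
  ultimately show "p * m dvd card {l\<in>{..<n}. v l ^ p = v i ^ p}" by (simp add: c_def)
qed



lemma point_lemma:
  fixes n d p :: nat and z :: "nat \<Rightarrow> complex"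
  assumes n: "0 < n" and d: "0 < d" and p: "prime p"
    and H: "\<forall>Q\<in>V d n. P1 n Q = 0 \<longrightarrow> v_symmetric n p Q"
    and zV: "z \<in> V d n"
  shows "\<exists>k. p ^ k dvd gcd d n \<and> (\<Sum>i<n. z i ^ (p ^ k)) \<noteq> 0"
proof (rule ccontr)
  assume C: "\<not> ?thesis"
  define g where "g = gcd d n"
  have g0: "g > 0" using n by (simp add: g_def)
  have p0: "0 < p" using p by (simp add: prime_gt_0_nat)
  have p1: "1 < p" using p prime_gt_1_nat by blast
  define u where "u = (\<lambda>j i. z i ^ (p ^ j))"
  have zd: "\<forall>i<n. z i ^ d = 1" and zn: "z (n - 1) = 1" using zV by (auto simp: V_def)
  have claim: "p ^ j dvd g \<and> (\<forall>i<n. p ^ j dvd card {l\<in>{..<n}. u j l = u j i})" for j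
  proof (induction j)
    case 0 show ?case by simp
  next
    case (Suc j)
    hence pj: "p ^ j dvd g" and md: "\<forall>i<n. p ^ j dvd card {l\<in>{..<n}. u j l = u j i}" by auto
    have uV: "u j \<in> V d n"
    proof -
      have "u j i ^ d = 1" if "i < n" for i
        using zd that by (simp add: u_def power_mult[symmetric] mult.commute) (simp add: power_mult)
      moreover have "u j (n - 1) = 1" using zn by (simp add: u_def)
      ultimately show ?thesis by (simp add: V_def)
    qed
    have "P1 n (u j) = 0" using C pj by (auto simp: P1_def u_def g_def)
    with H uV have "v_symmetric n p (u j)" by blast
    then obtain e \<tau> where e: "primitive_root p e" and t: "\<tau> permutes {..<n}"
      and ev: "\<forall>i<n. e * u j i = u j (\<tau> i)" by (auto simp: v_symmetric_def)
    have nz: "\<forall>i<n. u j i \<noteq> 0"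
    proof (intro allI impI)
      fix i assume i: "i < n"
      have "z i \<noteq> 0"
      proof
        assume "z i = 0"
        hence "z i ^ d = 0" using d by simp
        thus False using zd i by simp
      qed
      thus "u j i \<noteq> 0" by (simp add: u_def)
    qed
    have st: "\<forall>i<n. p * p ^ j dvd card {l\<in>{..<n}. u j l ^ p = u j i ^ p}"
      by (rule mult_step[OF p e t ev nz md])
    have usuc: "u (Suc j) l = u j l ^ p" for l by (simp add: u_def power_mult[symmetric] mult.commute)
    have md': "\<forall>i<n. p ^ Suc j dvd card {l\<in>{..<n}. u (Suc j) l = u (Suc j) i}"
      using st by (simp add: usuc)
    have dn: "p ^ Suc j dvd n" by (rule card_fibers_dvd[OF md'])
    have dd: "p ^ Suc j dvd d"
    proof -
      have "p ^ j dvd d" using pj by (simp add: g_def)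
      then obtain d' where d': "d = p ^ j * d'" by blast
      have u1: "u j i ^ d' = 1" if "i < n" for i
        using zd that d' by (simp add: u_def power_mult[symmetric])
      have t0: "\<tau> 0 < n" using permutes_in_image[OF t] n by simp
      have "(e * u j 0) ^ d' = u j (\<tau> 0) ^ d'" using ev n by simp
      hence "e ^ d' = 1" using u1[OF n] u1[OF t0] by (simp add: power_mult_distrib)
      hence "p dvd d'" by (rule prim_dvd[OF e _ p0])
      thus ?thesis using d' by (simp add: mult_dvd_mono)
    qed
    show ?case using dn dd md' by (simp add: g_def)
  qed
  have "p ^ g dvd g" using claim by blast
  hence "p ^ g \<le> g" using g0 by (simp add: dvd_imp_le)
  moreover have "g < 2 ^ g" by (rule less_exp)
  moreover have "2 ^ g \<le> p ^ g" using p1 by (simp add: power_mono)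
  ultimately show False by simp
qed



lemma hom_eval_lincomb:
  "hom_eval n a (\<lambda>\<alpha>. \<Sum>k\<in>Ks. c k * f k \<alpha>) z = (\<Sum>k\<in>Ks. c k * hom_eval n a (f k) z)"
proof -
  have "hom_eval n a (\<lambda>\<alpha>. \<Sum>k\<in>Ks. c k * f k \<alpha>) z
      = (\<Sum>\<alpha>\<in>mon_exps n a. \<Sum>k\<in>Ks. c k * (f k \<alpha> * (\<Prod>i<n. z i ^ \<alpha> i)))"
    unfolding hom_eval_def by (simp add: sum_distrib_right mult.assoc)
  also have "\<dots> = (\<Sum>k\<in>Ks. \<Sum>\<alpha>\<in>mon_exps n a. c k * (f k \<alpha> * (\<Prod>i<n. z i ^ \<alpha> i)))"
    by (rule sum.swap)
  also have "\<dots> = (\<Sum>k\<in>Ks. c k * hom_eval n a (f k) z)"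
    unfolding hom_eval_def by (simp add: sum_distrib_left)
  finally show ?thesis .
qed

lemma hom_eval_restrict:
  "hom_eval n a f (restrict z {..<n}) = hom_eval n a f z"
  unfolding hom_eval_def by (intro sum.cong refl arg_cong2[where f="(*)"] prod.cong) auto

lemma good_dir:
  fixes n d a p :: nat
  assumes n: "0 < n" and d: "0 < d" and p: "prime p"
    and H: "\<forall>Q\<in>V d n. P1 n Q = 0 \<longrightarrow> v_symmetric n p Q"
    and ga: "gcd d n dvd a"
  shows "good n d a"
proof -
  define g where "g = gcd d n"
  have g0: "g > 0" using n by (simp add: g_def)
  have p0: "0 < p" using p by (simp add: prime_gt_0_nat)
  have "\<forall>k. \<exists>f. p ^ k dvd g \<longrightarrow> sym_hom_poly n a f \<and>
          (\<forall>z. hom_eval n a f z = (\<Sum>i<n. z i ^ (p ^ k)) ^ (a div p ^ k))"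
  proof
    fix k
    show "\<exists>f. p ^ k dvd g \<longrightarrow> sym_hom_poly n a f \<and>
          (\<forall>z. hom_eval n a f z = (\<Sum>i<n. z i ^ (p ^ k)) ^ (a div p ^ k))"
    proof (cases "p ^ k dvd g")
      case True
      hence "p ^ k dvd a" using ga by (auto simp: g_def intro: dvd_trans)
      from psum_pow[OF _ this, of n] p0 show ?thesis by auto
    qed auto
  qed
  then obtain fk where fk: "\<And>k. p ^ k dvd g \<Longrightarrow> sym_hom_poly n a (fk k) \<and>
          (\<forall>z. hom_eval n a (fk k) z = (\<Sum>i<n. z i ^ (p ^ k)) ^ (a div p ^ k))"
    by metis
  define Ks where "Ks = {k\<in>{..g}. p ^ k dvd g}"
  have fKs: "finite Ks" by (simp add: Ks_def)
  have pt: "\<exists>k\<in>Ks. hom_eval n a (fk k) z \<noteq> 0" if zV: "z \<in> V d n" for z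
  proof -
    obtain k where k: "p ^ k dvd g" and s: "(\<Sum>i<n. z i ^ (p ^ k)) \<noteq> 0"
      using point_lemma[OF n d p H zV] by (auto simp: g_def)
    have "(2::nat) ^ k \<le> p ^ k" using prime_gt_1_nat[OF p] by (simp add: power_mono)
    hence "k < p ^ k" using less_exp[of k] by linarith
    hence "k \<le> g" using dvd_imp_le[OF k g0] by simp
    hence "k \<in> Ks" using k by (simp add: Ks_def)
    moreover have "hom_eval n a (fk k) z \<noteq> 0" using fk[OF k] s by simp
    ultimately show ?thesis by blast
  qed
  define q where "q = (\<lambda>z. \<Sum>k\<in>Ks. monom (hom_eval n a (fk k) z) k)"
  have pq: "poly (q z) t = (\<Sum>k\<in>Ks. t ^ k * hom_eval n a (fk k) z)" for z t
    by (simp add: q_def poly_sum poly_monom mult.commute)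
  have q0: "q z \<noteq> 0" if zV: "z \<in> V d n" for z
  proof
    assume q: "q z = 0"
    obtain k where k: "k \<in> Ks" "hom_eval n a (fk k) z \<noteq> 0" using pt[OF zV] by blast
    have "coeff (q z) k = hom_eval n a (fk k) z"
      unfolding q_def coeff_sum coeff_monom using k(1) fKs by (simp add: sum.delta)
    thus False using q k(2) by simp
  qed
  define R where "R = (\<lambda>z. restrict z {..<n}) ` V d n"
  have finR: "finite R"
  proof (rule finite_subset)
    show "R \<subseteq> PiE {..<n} (\<lambda>_. {w::complex. w ^ d = 1})"
      by (auto simp: R_def V_def PiE_def extensional_def)
    show "finite (PiE {..<n} (\<lambda>_. {w::complex. w ^ d = 1}))"
      using d by (intro finite_PiE finite_roots_unity) auto
  qed
  have qR: "q (restrict z {..<n}) = q z" for z by (simp add: q_def hom_eval_restrict)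
  define B where "B = (\<Union>w\<in>R. {t. poly (q w) t = 0})"
  have finB: "finite B"
    unfolding B_def
  proof (rule finite_UN_I[OF finR])
    fix w assume "w \<in> R"
    then obtain z where "z \<in> V d n" "w = restrict z {..<n}" by (auto simp: R_def)
    hence "q w \<noteq> 0" using q0 qR by simp
    thus "finite {t. poly (q w) t = 0}" by (rule poly_roots_finite)
  qed
  obtain t where t: "t \<notin> B" using ex_new_if_finite[OF infinite_UNIV_char_0 finB] by blast
  define F where "F = (\<lambda>\<alpha>. \<Sum>k\<in>Ks. t ^ k * fk k \<alpha>)"
  have symF: "sym_hom_poly n a F"
    unfolding sym_hom_poly_def
  proof (intro conjI allI impI)
    fix \<alpha> assume "\<alpha> \<notin> mon_exps n a"
    thus "F \<alpha> = 0" unfolding F_def using fk by (intro sum.neutral) (auto simp: Ks_def sym_hom_poly_def)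
  next
    fix \<sigma> \<alpha> assume "\<sigma> permutes {..<n}"
    thus "F (\<alpha> \<circ> \<sigma>) = F \<alpha>" unfolding F_def using fk
      by (intro sum.cong refl) (auto simp: Ks_def sym_hom_poly_def)
  qed
  have "hom_eval n a F z \<noteq> 0" if zV: "z \<in> V d n" for z
  proof -
    have "hom_eval n a F z = poly (q z) t" unfolding F_def hom_eval_lincomb pq ..
    also have "\<dots> = poly (q (restrict z {..<n})) t" by (simp add: qR)
    also have "\<dots> \<noteq> 0" using t zV by (auto simp: B_def R_def)
    finally show ?thesis .
  qed
  thus ?thesis using symF by (auto simp: good_def)
qed


theorem proposition3p19:
  fixes n d a p :: nat
  assumes "0 < n" and "0 < d" and "0 < a" and "prime p"
    and "\<forall>Q\<in>V d n. P1 n Q = 0 \<longrightarrow> v_symmetric n p Q"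
    and "p dvd gcd d n"
  shows "bad n d a \<longleftrightarrow> \<not> (gcd d n dvd a)"
proof
  assume "bad n d a"
  thus "\<not> gcd d n dvd a" using good_dir[OF assms(1,2,4,5)] by (auto simp: bad_def)
next
  assume "\<not> gcd d n dvd a"
  thus "bad n d a" using bad_dir[OF assms(1,2)] by (auto simp: bad_def)
qed

end
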